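(* Let $S$ be a reflective numerical semigroup with $\mathrm{g}(S)=g\ge1$ and $\mathrm{m}(S)=a$. Let $q=\lfloor g/a\rfloor$ and $r=g-qa$. Then \[ \mathrm{PF}(S)=\{g-(r-1),\,g-(r-2),\dots,g-1\}\cup\{2g-r\}, \] and in particular the type of $S$ equals $r$.
   Context: A numerical semigroup is a submonoid $S$ of $(\mathbb{N}_0,+)$ with finite complement. Its set of gaps is $\mathrm{H}(S)=\mathbb{N}_0\setminus S$, its genus is $\mathrm{g}(S)=\#\mathrm{H}(S)$, and its multiplicity $\mathrm{m}(S)$ is the smallest positive element of $S$. The set of pseudo-Frobenius numbers is $\mathrm{PF}(S)=\{h\in\mathrm{H}(S): h+s\in S\text{ for all } 0\ne s\in S\}$, and the type of $S$ is $\#\mathrm{PF}(S)$. A numerical semigroup $S$ of genus $g\ge1$ is called reflective if for every $z\in\{0,1,\dots,g-1\}$ exactly one of $z$ and $z+g$ belongs to $S$. (When $S$ is reflective, $a\nmid g$, so $1\le r\le a-1$.) *)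

theory Defs
  imports Main
begin

definition numerical_semigroup :: "nat set \<Rightarrow> bool" where
  "numerical_semigroup S \<longleftrightarrow> 0 \<in> S \<and> (\<forall>x\<in>S. \<forall>y\<in>S. x + y \<in> S) \<and> finite (UNIV - S)"

definition gaps :: "nat set \<Rightarrow> nat set" where
  "gaps S = UNIV - S"

definition genus :: "nat set \<Rightarrow> nat" where
  "genus S = card (gaps S)"

definition multiplicity :: "nat set \<Rightarrow> nat" where
  "multiplicity S = (LEAST s. s \<in> S \<and> 0 < s)"

definition pseudo_frobenius :: "nat set \<Rightarrow> nat set" where
  "pseudo_frobenius S = {h \<in> gaps S. \<forall>s\<in>S. s \<noteq> 0 \<longrightarrow> h + s \<in> S}"

definition sg_type :: "nat set \<Rightarrow> nat" where
  "sg_type S = card (pseudo_frobenius S)"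

definition reflective :: "nat set \<Rightarrow> bool" where
  "reflective S \<longleftrightarrow> genus S \<ge> 1 \<and>
     (\<forall>z < genus S. (z \<in> S) \<noteq> (z + genus S \<in> S))"

end

theory Submission
  imports Defs
begin

lemma close_mult_eq:
  fixes a x y :: nat
  assumes "a dvd x" "a dvd y" "x < y + a" "y < x + a"
  shows "x = y"
proof (rule ccontr)
  assume ne: "x \<noteq> y"
  show False
  proof (cases "x < y")
    case True
    have "a dvd y - x" using assms by (simp add: dvd_diff_nat)
    moreover have "0 < y - x" "y - x < a" using True assms by auto
    ultimately show False using dvd_imp_le by fastforce
  next
    case False
    have "a dvd x - y" using assms by (simp add: dvd_diff_nat)
    moreover have "0 < x - y" "x - y < a" using False ne assms by auto
    ultimately show False using dvd_imp_le by fastforce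
  qed
qed

lemma pf_abstract:
  fixes S :: "nat set" and a g r :: nat
  assumes apos: "0 < a" and g1: "g \<ge> 1" and r0: "0 < r" and ra: "r < a" and rg: "r \<le> g"
    and adv: "a dvd (g - r)"
    and mem: "\<And>n. n \<in> S \<longleftrightarrow> (n < g \<and> a dvd n) \<or> (g \<le> n \<and> n < 2*g \<and> \<not> a dvd (n - g)) \<or> 2*g \<le> n"
    and amin: "\<And>s. s \<in> S \<Longrightarrow> s \<noteq> 0 \<Longrightarrow> a \<le> s"
    and aS: "a \<in> S"
  shows "h \<in> pseudo_frobenius S \<longleftrightarrow> (g - r < h \<and> h < g) \<or> h = 2*g - r"
proof
  have below: "x \<le> g - r" if "a dvd x" "x < g" for x
  proof (rule ccontr)
    assume "\<not> x \<le> g - r"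
    hence "x = g - r" using close_mult_eq[OF that(1) adv] that ra by linarith
    thus False using \<open>\<not> x \<le> g - r\<close> by simp
  qed
  assume h: "h \<in> pseudo_frobenius S"
  hence gap: "h \<notin> S" and cl: "\<And>s. s \<in> S \<Longrightarrow> s \<noteq> 0 \<Longrightarrow> h + s \<in> S"
    by (auto simp: pseudo_frobenius_def gaps_def)
  have h2: "h < 2*g" using gap mem[of h] by linarith
  show "(g - r < h \<and> h < g) \<or> h = 2*g - r"
  proof (cases "g \<le> h")
    case True
    hence d: "a dvd (h - g)" using gap mem[of h] h2 by auto
    have "h + a \<in> S" using cl[OF aS] apos by simp
    have "2*g \<le> h + a"
    proof (rule ccontr)
      assume "\<not> 2*g \<le> h + a"
      hence "\<not> a dvd (h + a - g)" using \<open>h + a \<in> S\<close> mem[of "h+a"] True by auto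
      moreover have "h + a - g = (h - g) + a" using True by simp
      ultimately show False using d by simp
    qed
    hence "h - g = g - r" using close_mult_eq[OF d adv] h2 ra rg r0 True by linarith
    thus ?thesis using True rg by linarith
  next
    case False
    hence nd: "\<not> a dvd h" using gap mem[of h] by auto
    have "g - r < h"
    proof (rule ccontr)
      assume "\<not> g - r < h"
      hence le: "h \<le> g - r" by simp
      have "h \<noteq> g - r" using nd adv by auto
      hence lt: "h < g - r" using le by simp
      define s where "s = g + (g - r - h)"
      have nd2: "\<not> a dvd (g - r - h)"
      proof
        assume "a dvd (g - r - h)"
        hence "a dvd (g - r - (g - r - h))" using dvd_diff_nat[OF adv] by blast
        moreover have "g - r - (g - r - h) = h" using lt by simp
        ultimately show False using nd by simp
      qed
      have "s \<in> S" using mem[of s] nd2 lt s_def by auto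
      moreover have "s \<noteq> 0" using s_def g1 by simp
      ultimately have "h + s \<in> S" using cl by simp
      moreover have "h + s = g + (g - r)" using s_def lt by simp
      ultimately show False using mem[of "h+s"] adv rg r0 by auto
    qed
    thus ?thesis using False by simp
  qed
next
  have below: "x \<le> g - r" if "a dvd x" "x < g" for x
  proof (rule ccontr)
    assume "\<not> x \<le> g - r"
    hence "x = g - r" using close_mult_eq[OF that(1) adv] that ra by linarith
    thus False using \<open>\<not> x \<le> g - r\<close> by simp
  qed
  assume "(g - r < h \<and> h < g) \<or> h = 2*g - r"
  thus "h \<in> pseudo_frobenius S"
  proof
    assume hh: "g - r < h \<and> h < g"
    have gap: "h \<notin> S" using mem[of h] below[of h] hh by auto
    have "h + s \<in> S" if s: "s \<in> S" "s \<noteq> 0" for s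
    proof (cases "2*g \<le> h + s")
      case True thus ?thesis using mem[of "h+s"] by auto
    next
      case F: False
      have "a \<le> s" using amin s by simp
      hence ge: "g \<le> h + s" using hh ra by linarith
      have "\<not> a dvd (h + s - g)"
      proof
        assume d: "a dvd (h + s - g)"
        show False
        proof (cases "s < g")
          case True
          hence "a dvd s" using mem[of s] s by auto
          hence "a dvd (s - (h + s - g))" using d by (simp add: dvd_diff_nat)
          moreover have "s - (h + s - g) = g - h" using hh ge by simp
          ultimately have "a \<le> g - h" using hh by (simp add: dvd_imp_le)
          thus False using hh ra by linarith
        next
          case False
          have "h + s - g \<le> g - r" using below[OF d] F by linarith
          thus False using False hh by linarith
        qed
      qed
      thus ?thesis using mem[of "h+s"] ge F by auto
    qed
    thus ?thesis using gap by (auto simp: pseudo_frobenius_def gaps_def)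
  next
    assume hh: "h = 2*g - r"
    have gap: "h \<notin> S" using mem[of h] hh adv r0 rg by auto
    have "h + s \<in> S" if s: "s \<in> S" "s \<noteq> 0" for s
    proof -
      have "a \<le> s" using amin s by simp
      hence "2*g \<le> h + s" using hh ra rg by linarith
      thus ?thesis using mem[of "h+s"] by auto
    qed
    thus ?thesis using gap by (auto simp: pseudo_frobenius_def gaps_def)
  qed
qed

theorem mainTheorem7:
  fixes S :: "nat set" and g a q r :: nat
  assumes "numerical_semigroup S"
    and "reflective S"
    and "genus S = g" and "g \<ge> 1"
    and "multiplicity S = a"
    and "q = g div a"
    and "r = g - q * a"
  shows "pseudo_frobenius S = {g - (r - 1) .. g - 1} \<union> {2 * g - r}
         \<and> sg_type S = r"
proof -
  have S0: "0 \<in> S" and Sadd: "\<And>x y. x \<in> S \<Longrightarrow> y \<in> S \<Longrightarrow> x + y \<in> S"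
    and fin: "finite (gaps S)"
    using assms(1) by (auto simp: numerical_semigroup_def gaps_def)
  have refl: "\<And>z. z < g \<Longrightarrow> (z \<in> S) \<noteq> (z + g \<in> S)"
    using assms(2,3) by (auto simp: reflective_def)
  have cardg: "card (gaps S) = g" using assms(3) by (simp add: genus_def)
  define f where "f z = (if z \<in> S then z + g else z)" for z
  have fimg: "f ` {..<g} \<subseteq> gaps S \<inter> {..<2*g}"
    using refl by (auto simp: f_def gaps_def)
  have finj: "inj_on f {..<g}"
    unfolding inj_on_def f_def by (auto split: if_splits)
  have big: "n \<in> S" if "2*g \<le> n" for n
  proof (rule ccontr)
    assume "n \<notin> S"
    hence "insert n (f ` {..<g}) \<subseteq> gaps S" using fimg by (auto simp: gaps_def)
    hence "card (insert n (f ` {..<g})) \<le> g" using card_mono[OF fin] cardg by metis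
    moreover have "n \<notin> f ` {..<g}" using fimg that by auto
    hence "card (insert n (f ` {..<g})) = g + 1"
      using card_image[OF finj] by simp
    ultimately show False by simp
  qed
  have gS: "g \<notin> S" using refl[of 0] S0 assms(4) by auto
  have sub: "u - s \<in> S" if "s \<in> S" "u \<in> S" "s \<le> u" "u < g" for s u
  proof (rule ccontr)
    assume "u - s \<notin> S"
    hence "u - s + g \<in> S" using refl[of "u-s"] that by auto
    hence "u - s + g + s \<in> S" using Sadd that(1) by blast
    moreover have "u - s + g + s = u + g" using that by simp
    ultimately show False using refl[of u] that by auto
  qed
  have ex: "2*g \<in> S \<and> 0 < 2*g" using big assms(4) by simp
  have aS: "a \<in> S" and apos: "0 < a"
    using LeastI[of "\<lambda>s. s \<in> S \<and> 0 < s", OF ex] assms(5) by (auto simp: multiplicity_def)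
  have amin: "a \<le> s" if "s \<in> S" "s \<noteq> 0" for s
    using Least_le[of "\<lambda>s. s \<in> S \<and> 0 < s" s] that assms(5) by (auto simp: multiplicity_def)
  have multS: "k * a \<in> S" for k
    by (induction k) (use S0 aS Sadd in auto)
  have low: "n \<in> S \<longleftrightarrow> a dvd n" if "n < g" for n
  proof
    assume "a dvd n" thus "n \<in> S" using multS by (auto simp: mult.commute)
  next
    show "n \<in> S \<Longrightarrow> a dvd n" using that
    proof (induction n rule: less_induct)
      case (less n)
      show ?case
      proof (cases "n = 0")
        case True thus ?thesis by simp
      next
        case False
        hence "a \<le> n" using amin less.prems by simp
        hence "n - a \<in> S" using sub[OF aS less.prems(1)] less.prems by simp
        hence "a dvd n - a" using less.IH[of "n-a"] apos False less.prems by simp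
        thus ?thesis using \<open>a \<le> n\<close> by (metis dvd_add_left_iff dvd_refl le_add_diff_inverse2)
      qed
    qed
  qed
  have mem: "n \<in> S \<longleftrightarrow> (n < g \<and> a dvd n) \<or> (g \<le> n \<and> n < 2*g \<and> \<not> a dvd (n - g)) \<or> 2*g \<le> n" for n
  proof -
    consider "n < g" | "g \<le> n \<and> n < 2*g" | "2*g \<le> n" by linarith
    thus ?thesis
    proof cases
      case 1 thus ?thesis using low by auto
    next
      case 2
      have lt: "n - g < g" and e: "n - g + g = n" using 2 by auto
      have "(n - g \<in> S) \<noteq> (n \<in> S)" using refl[OF lt] e by simp
      hence "n \<in> S \<longleftrightarrow> \<not> a dvd (n - g)" using low[OF lt] by blast
      thus ?thesis using 2 by simp
    next
      case 3 thus ?thesis using big by auto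
    qed
  qed
  have nd: "\<not> a dvd g"
  proof
    assume d: "a dvd g"
    hence "a \<le> g" using assms(4) by (simp add: dvd_imp_le)
    show False
    proof (cases "a = g")
      case True thus False using aS gS by simp
    next
      case False
      hence "g - a \<in> S" using low[of "g-a"] d apos \<open>a \<le> g\<close> by (simp add: dvd_diff_nat)
      hence "g - a + a \<in> S" using Sadd aS by blast
      thus False using gS \<open>a \<le> g\<close> by simp
    qed
  qed
  have rmod: "r = g mod a" using assms(6,7) by (simp add: minus_div_mult_eq_mod)
  have r0: "0 < r" using nd rmod by (simp add: mod_eq_0_iff_dvd[symmetric] gr0I)
  have ra: "r < a" using rmod apos by simp
  have rg: "r \<le> g" using assms(7) by simp
  have adv: "a dvd (g - r)" using assms(6,7) by (simp add: rg)
  have pfc: "\<And>h. h \<in> pseudo_frobenius S \<longleftrightarrow> (g - r < h \<and> h < g) \<or> h = 2*g - r"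
    by (rule pf_abstract[OF apos assms(4) r0 ra rg adv mem amin aS])
  have eq: "pseudo_frobenius S = {g - (r - 1) .. g - 1} \<union> {2 * g - r}"
  proof (rule set_eqI)
    fix h
    have "h \<in> {g - (r - 1) .. g - 1} \<union> {2 * g - r} \<longleftrightarrow> (g - r < h \<and> h < g) \<or> h = 2*g - r"
      using r0 rg assms(4) by auto
    thus "h \<in> pseudo_frobenius S \<longleftrightarrow> h \<in> {g - (r - 1) .. g - 1} \<union> {2 * g - r}"
      using pfc[of h] by blast
  qed
  have "card ({g - (r - 1) .. g - 1} \<union> {2 * g - r}) = r"
  proof -
    have "2*g - r \<notin> {g - (r - 1) .. g - 1}" using rg r0 assms(4) by auto
    hence "card ({g - (r - 1) .. g - 1} \<union> {2 * g - r}) = card {g - (r - 1) .. g - 1} + 1" by simp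
    thus ?thesis using r0 rg by simp
  qed
  thus ?thesis using eq by (simp add: sg_type_def)
qed

end
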